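(* Let $\theta:\mathbb{A}\to\mathbb{A}^\lambda$ and $\zeta:\mathbb{B}\to\mathbb{B}^\lambda$ be primitive substitutions of the same length $\lambda$, each satisfying the standing assumptions, and let $\Sigma=\theta\vee\zeta:\mathcal{A}\to\mathcal{A}^\lambda$ be a substitution joining of them. Then $\operatorname{lcm}(h(\theta),h(\zeta))\mid h(\Sigma)$ and $$\max(c(\theta),c(\zeta))\le c(\Sigma)\le c(\theta)\cdot c(\zeta).$$
   Context: A substitution $\theta:\mathbb{A}\to\mathbb{A}^\lambda$ ($\lambda\ge2$) is primitive if some iterate $\theta^k(a)$ contains all letters for every $a$. Standing assumptions for a substitution: some letter $a_0$ with $\theta(a_0)_0=a_0$, injective on letters, infinite subshift. Height $h(\theta)=\max\{m\ge1:\gcd(m,\lambda)=1,\ m\mid\gcd\{r\ge1:u[r]=u[0]\}\}$ with $u$ the fixed point starting with $a_0$ (for $\Sigma$, use a fixed point of a suitable power); column number $c(\theta)=\min_{k\ge1,0\le j<\lambda^k}|\{\theta^k(a)_j:a\in\mathbb{A}\}|$. A substitution joining: $\mathcal{A}\subset\mathbb{A}\times\mathbb{B}$ with both coordinate projections surjective and such that $(a,b)\in\mathcal{A}$ implies $(\theta(a)_j,\zeta(b)_j)\in\mathcal{A}$ for all $0\le j<\lambda$; $\Sigma(a,b)_j=(\theta(a)_j,\zeta(b)_j)$, and $\Sigma$ is assumed primitive and to have a letter $e$ with $\Sigma(e)_0=e$. *)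

theory Defs
  imports Main
begin

text \<open>A substitution of constant length l on letters of type 'a is a function
  th :: 'a => nat => 'a, where th a j is the j-th letter (j < l) of th(a).\<close>

fun subst_iter :: "('a \<Rightarrow> nat \<Rightarrow> 'a) \<Rightarrow> nat \<Rightarrow> nat \<Rightarrow> 'a \<Rightarrow> nat \<Rightarrow> 'a" where
  "subst_iter th l 0 a j = a"
| "subst_iter th l (Suc k) a j = th (subst_iter th l k a (j div l)) (j mod l)"

definition primitive :: "('a \<Rightarrow> nat \<Rightarrow> 'a) \<Rightarrow> nat \<Rightarrow> 'a set \<Rightarrow> bool" where
  "primitive th l A \<longleftrightarrow>
     (\<exists>k. \<forall>a\<in>A. \<forall>b\<in>A. \<exists>j < l ^ k. subst_iter th l k a j = b)"

definition subshift :: "('a \<Rightarrow> nat \<Rightarrow> 'a) \<Rightarrow> nat \<Rightarrow> 'a set \<Rightarrow> (int \<Rightarrow> 'a) set" where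
  "subshift th l A = {x. \<forall>m n. m \<le> n \<longrightarrow>
      (\<exists>a\<in>A. \<exists>k i. i + nat (n - m) < l ^ k \<and>
          (\<forall>t. m \<le> t \<and> t \<le> n \<longrightarrow> x t = subst_iter th l k a (i + nat (t - m))))}"

definition standing :: "('a \<Rightarrow> nat \<Rightarrow> 'a) \<Rightarrow> nat \<Rightarrow> 'a set \<Rightarrow> 'a \<Rightarrow> bool" where
  "standing th l A a0 \<longleftrightarrow>
     finite A \<and> (\<forall>a\<in>A. \<forall>j<l. th a j \<in> A) \<and>
     a0 \<in> A \<and> th a0 0 = a0 \<and>
     (\<forall>a\<in>A. \<forall>b\<in>A. (\<forall>j<l. th a j = th b j) \<longrightarrow> a = b) \<and>
     infinite (subshift th l A)"

definition fixpt :: "('a \<Rightarrow> nat \<Rightarrow> 'a) \<Rightarrow> nat \<Rightarrow> 'a \<Rightarrow> nat \<Rightarrow> 'a" where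
  "fixpt th l a0 r = subst_iter th l (Suc r) a0 r"

definition height :: "('a \<Rightarrow> nat \<Rightarrow> 'a) \<Rightarrow> nat \<Rightarrow> 'a \<Rightarrow> nat" where
  "height th l a0 = (GREATEST m. m \<ge> 1 \<and> gcd m l = 1 \<and>
       m dvd Gcd {r. r \<ge> 1 \<and> fixpt th l a0 r = fixpt th l a0 0})"

definition column :: "('a \<Rightarrow> nat \<Rightarrow> 'a) \<Rightarrow> nat \<Rightarrow> 'a set \<Rightarrow> nat" where
  "column th l A = (LEAST n. \<exists>k\<ge>1. \<exists>j < l ^ k.
       n = card ((\<lambda>a. subst_iter th l k a j) ` A))"

definition join_subst :: "('a \<Rightarrow> nat \<Rightarrow> 'a) \<Rightarrow> ('b \<Rightarrow> nat \<Rightarrow> 'b) \<Rightarrow> ('a \<times> 'b) \<Rightarrow> nat \<Rightarrow> ('a \<times> 'b)" where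
  "join_subst th ze p j = (th (fst p) j, ze (snd p) j)"

definition is_subst_joining ::
  "('a \<Rightarrow> nat \<Rightarrow> 'a) \<Rightarrow> ('b \<Rightarrow> nat \<Rightarrow> 'b) \<Rightarrow> nat \<Rightarrow> 'a set \<Rightarrow> 'b set \<Rightarrow> ('a \<times> 'b) set \<Rightarrow> bool" where
  "is_subst_joining th ze l A B J \<longleftrightarrow>
     J \<subseteq> A \<times> B \<and> fst ` J = A \<and> snd ` J = B \<and>
     (\<forall>a b. (a, b) \<in> J \<longrightarrow> (\<forall>j<l. (th a j, ze b j) \<in> J))"

end

theory Submission
  imports Defs
begin

lemma si_add:
  assumes "0 < l"
  shows "subst_iter th l (k+m) a j = subst_iter th l m (subst_iter th l k a (j div l^m)) (j mod l^m)"
proof (induction m arbitrary: j)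
  case 0 then show ?case by simp
next
  case (Suc m)
  have e1: "j div l div l^m = j div l^(Suc m)" by (simp add: div_mult2_eq)
  have e2: "j mod (l^Suc m) div l = j div l mod l^m"
    by (simp add: mod_mult2_eq assms)
  have e3: "j mod (l^Suc m) mod l = j mod l"
    by (simp add: mod_mod_cancel)
  show ?case using Suc e1 e2 e3 by simp
qed

lemma si_closed:
  assumes "0 < l" "\<forall>a\<in>A. \<forall>j<l. th a j \<in> A"
  shows "a \<in> A \<Longrightarrow> j < l^k \<Longrightarrow> subst_iter th l k a j \<in> A"
proof (induction k arbitrary: j)
  case 0 then show ?case by simp
next
  case (Suc k)
  have "j div l < l^k" using Suc.prems(2)
    by (simp add: less_mult_imp_div_less mult.commute)
  then show ?case using Suc assms by simp
qed

lemma si_fix0: "th a0 0 = a0 \<Longrightarrow> subst_iter th l k a0 0 = a0"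
  by (induction k) auto

lemma si_stable:
  assumes "0 < l" "th a0 0 = a0" "j < l^k"
  shows "subst_iter th l (m+k) a0 j = subst_iter th l k a0 j"
  using si_add[OF assms(1), of th m k a0 j] assms si_fix0[of th a0 l m] by simp

lemma j_lt_pow: "2 \<le> (l::nat) \<Longrightarrow> j < l ^ Suc j"
proof -
  assume l: "2 \<le> l"
  have "j < 2^j" by (rule less_exp)
  also have "(2::nat)^j \<le> l^j" using l by (simp add: power_mono)
  also have "l^j \<le> l^Suc j" using l by simp
  finally show ?thesis .
qed

lemma fixpt_eq:
  assumes "2 \<le> l" "th a0 0 = a0" "j < l^k"
  shows "fixpt th l a0 j = subst_iter th l k a0 j"
proof -
  let ?K = "max k (Suc j)"
  have a: "subst_iter th l ?K a0 j = subst_iter th l k a0 j"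
    using si_stable[of l th a0 j k "?K - k"] assms by simp
  have b: "subst_iter th l ?K a0 j = subst_iter th l (Suc j) a0 j"
    using si_stable[of l th a0 j "Suc j" "?K - Suc j"] assms j_lt_pow[OF assms(1), of j] by simp
  show ?thesis using a b by (simp add: fixpt_def)
qed

lemma fixpt_F:
  assumes "2 \<le> l" "th a0 0 = a0" "i < l^K"
  shows "fixpt th l a0 (n*l^K + i) = subst_iter th l K (fixpt th l a0 n) i"
proof -
  have n: "n < l^Suc n" using j_lt_pow assms(1) by blast
  have "n*l^K + i < (n+1)*l^K" using assms(3) by simp
  also have "\<dots> \<le> l^Suc n * l^K" using n by (intro mult_right_mono) auto
  finally have lt: "n*l^K + i < l^(Suc n + K)" by (simp add: power_add)
  have "fixpt th l a0 (n*l^K + i) = subst_iter th l (Suc n + K) a0 (n*l^K + i)"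
    using fixpt_eq[of l th a0 "n*l^K+i" "Suc n + K"] assms lt by simp
  also have "\<dots> = subst_iter th l K (subst_iter th l (Suc n) a0 n) i"
    using si_add[of l th "Suc n" K a0 "n*l^K+i"] assms by simp
  finally show ?thesis by (simp add: fixpt_def)
qed

definition good where
  "good th l A a0 \<longleftrightarrow> 2 \<le> l \<and> (\<forall>a\<in>A. \<forall>j<l. th a j \<in> A) \<and> a0 \<in> A \<and> th a0 0 = a0
     \<and> primitive th l A"

definition GG where
  "GG th l a0 = Gcd {r. r \<ge> 1 \<and> fixpt th l a0 r = fixpt th l a0 0}"

lemma fixpt0: "th a0 0 = a0 \<Longrightarrow> fixpt th l a0 0 = a0"
  by (simp add: fixpt_def)

lemma fixpt_in: "good th l A a0 \<Longrightarrow> fixpt th l a0 n \<in> A"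
  unfolding good_def fixpt_def
  using si_closed[of l A th a0 n "Suc n"] j_lt_pow[of l n] by auto

lemma prim_hit:
  assumes "good th l A a0" "b \<in> A"
  obtains K where "\<forall>c\<in>A. \<exists>i<l^K. subst_iter th l K c i = b"
  using assms unfolding good_def primitive_def by blast

lemma appears:
  assumes "good th l A a0" "b \<in> A"
  shows "\<exists>n. fixpt th l a0 n = b"
proof -
  obtain K where K: "\<forall>c\<in>A. \<exists>i<l^K. subst_iter th l K c i = b" by (rule prim_hit[OF assms])
  have g: "a0 \<in> A" "2 \<le> l" "th a0 0 = a0" using assms(1) unfolding good_def by auto
  obtain i where i: "i < l^K" "subst_iter th l K a0 i = b" using K g(1) by blast
  have "fixpt th l a0 i = subst_iter th l K a0 i" using fixpt_eq[of l th a0 i K] g i by simp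
  then show ?thesis using i(2) by blast
qed

lemma GG_dvd:
  assumes "good th l A a0" "fixpt th l a0 x = a0"
  shows "GG th l a0 dvd x"
proof (cases "x = 0")
  case False
  then show ?thesis using assms fixpt0[of th a0 l] unfolding GG_def good_def
    by (intro Gcd_dvd) auto
qed simp

lemma GG_pos:
  assumes "good th l A a0"
  shows "GG th l a0 \<noteq> 0"
proof -
  have b: "fixpt th l a0 1 \<in> A" using fixpt_in assms .
  obtain K where K: "\<forall>c\<in>A. \<exists>i<l^K. subst_iter th l K c i = a0"
    using prim_hit[OF assms, of a0] assms unfolding good_def by blast
  then obtain i where i: "i < l^K" "subst_iter th l K (fixpt th l a0 1) i = a0" using b by blast
  have "fixpt th l a0 (1*l^K + i) = a0"
    using fixpt_F[of l th a0 i K 1] i assms unfolding good_def by simp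
  then have "GG th l a0 dvd (1*l^K + i)" by (rule GG_dvd[OF assms])
  moreover have "1*l^K + i \<noteq> 0" using assms unfolding good_def by simp
  ultimately show ?thesis using dvd_0_left_iff by metis
qed

lemma class_lemma:
  assumes g: "good th l A a0" and d: "coprime d l" "d dvd GG th l a0"
    and eq: "fixpt th l a0 n = fixpt th l a0 m"
  shows "int d dvd int n - int m"
proof -
  have b: "fixpt th l a0 n \<in> A" using fixpt_in g .
  obtain K where K: "\<forall>c\<in>A. \<exists>i<l^K. subst_iter th l K c i = a0"
    using prim_hit[OF g, of a0] g unfolding good_def by blast
  then obtain i where i: "i < l^K" "subst_iter th l K (fixpt th l a0 n) i = a0" using b by blast
  have gl: "2 \<le> l" "th a0 0 = a0" using g unfolding good_def by auto
  have "fixpt th l a0 (n*l^K + i) = subst_iter th l K (fixpt th l a0 n) i"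
    using fixpt_F[of l th a0 i K n] i(1) gl by blast
  then have "fixpt th l a0 (n*l^K + i) = a0" using i(2) by simp
  then have "GG th l a0 dvd (n*l^K + i)" by (rule GG_dvd[OF g])
  then have x: "d dvd (n*l^K + i)" by (rule dvd_trans[OF d(2)])
  have "fixpt th l a0 (m*l^K + i) = subst_iter th l K (fixpt th l a0 m) i"
    using fixpt_F[of l th a0 i K m] i(1) gl by blast
  then have "fixpt th l a0 (m*l^K + i) = a0" using i(2) eq by simp
  then have "GG th l a0 dvd (m*l^K + i)" by (rule GG_dvd[OF g])
  then have y: "d dvd (m*l^K + i)" by (rule dvd_trans[OF d(2)])
  have x': "int d dvd int (n*l^K + i)" using x by (simp only: int_dvd_int_iff)
  have y': "int d dvd int (m*l^K + i)" using y by (simp only: int_dvd_int_iff)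
  have "int d dvd int (n*l^K + i) - int (m*l^K + i)" using x' y' by (rule dvd_diff)
  moreover have "int (n*l^K + i) - int (m*l^K + i) = (int n - int m) * (int l)^K"
    by (simp add: algebra_simps)
  ultimately have "int d dvd (int n - int m) * (int l)^K" by simp
  moreover have "coprime (int d) ((int l)^K)" using d(1) by simp
  ultimately show ?thesis using coprime_dvd_mult_left_iff by blast
qed

lemma height_props:
  assumes g: "good th l A a0"
  shows "coprime (height th l a0) l \<and> height th l a0 dvd GG th l a0 \<and>
     (\<forall>m. coprime m l \<longrightarrow> m dvd GG th l a0 \<longrightarrow> m dvd height th l a0)"
proof -
  let ?G = "GG th l a0"
  let ?Q = "\<lambda>m. m \<ge> 1 \<and> gcd m l = 1 \<and> m dvd ?G"
  have hdef: "height th l a0 = Greatest ?Q" unfolding height_def GG_def by simp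
  have G0: "?G \<noteq> 0" using GG_pos g .
  have Q1: "?Q 1" by simp
  have minor: "\<And>y. ?Q y \<Longrightarrow> y \<le> ?G"
  proof -
    fix y assume "?Q y"
    then have "y dvd ?G" by blast
    moreover have "0 < ?G" using G0 by simp
    ultimately show "y \<le> ?G" by (rule dvd_imp_le)
  qed
  have Qh: "?Q (height th l a0)" unfolding hdef
    using GreatestI_nat[of ?Q 1 ?G, OF Q1 minor] .
  have le: "y \<le> height th l a0" if Qy: "?Q y" for y
    unfolding hdef using Greatest_le_nat[of ?Q y ?G, OF Qy minor] .
  have "m dvd height th l a0" if m: "coprime m l" "m dvd ?G" for m
  proof -
    let ?h = "height th l a0"
    have m0: "m \<noteq> 0" using m(2) G0 by auto
    have h0: "?h \<noteq> 0" using Qh by auto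
    have hc: "coprime ?h l" using Qh by (simp add: coprime_iff_gcd_eq_1)
    have hG: "?h dvd ?G" using Qh by blast
    have L0: "lcm m ?h \<noteq> 0" using m0 h0 by (simp add: lcm_eq_0_iff)
    have ld: "lcm m ?h dvd m * ?h" by (intro lcm_least) auto
    have "coprime (m * ?h) l" using m(1) hc by simp
    then have lc: "coprime (lcm m ?h) l" using ld by (rule coprime_divisors[rotated 2]) simp
    have lG: "lcm m ?h dvd ?G" using m(2) hG by (rule lcm_least)
    have L1: "1 \<le> lcm m ?h" using L0 by linarith
    have "gcd (lcm m ?h) l = 1" using lc by (simp add: coprime_iff_gcd_eq_1)
    then have "?Q (lcm m ?h)" using L1 lG by blast
    then have "lcm m ?h \<le> ?h" by (rule le)
    moreover have "?h \<le> lcm m ?h" using L0 by (intro dvd_imp_le) (simp_all add: lcm_pos_nat)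
    ultimately have "lcm m ?h = ?h" by simp
    then show ?thesis using dvd_lcm1[of m ?h] by simp
  qed
  then show ?thesis using Qh by (simp add: coprime_iff_gcd_eq_1)
qed

lemma other_fixed:
  assumes g: "good th l A a0" and e1: "e1 \<in> A" "th e1 0 = e1"
    and r: "subst_iter th l (Suc r) e1 r = e1"
  shows "height th l a0 dvd r"
proof -
  obtain p where p: "fixpt th l a0 p = e1" using appears[OF g e1(1)] by blast
  have l: "2 \<le> l" "th a0 0 = a0" using g unfolding good_def by auto
  have rl: "r < l ^ Suc r" by (rule j_lt_pow[OF l(1)])
  have z: "0 < l ^ Suc r" using l by simp
  have x1: "fixpt th l a0 (p*l^Suc r + r) = e1" using fixpt_F[of l th a0 r "Suc r" p] l rl p r by simp
  have x2: "fixpt th l a0 (p*l^Suc r + 0) = e1"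
    using fixpt_F[of l th a0 0 "Suc r" p] l z p si_fix0[of th e1 l "Suc r"] e1(2) by simp
  have hp: "coprime (height th l a0) l" "height th l a0 dvd GG th l a0"
    using height_props[OF g] by blast+
  have "int (height th l a0) dvd int (p*l^Suc r + r) - int (p*l^Suc r + 0)"
    using class_lemma[OF g hp, of "p*l^Suc r + r" "p*l^Suc r + 0"] x1 x2 by simp
  then show ?thesis by simp
qed

lemma si_join:
  "subst_iter (join_subst th ze) l k p j = (subst_iter th l k (fst p) j, subst_iter ze l k (snd p) j)"
  by (induction k arbitrary: j) (auto simp: join_subst_def)

lemma col_attained:
  assumes "0 < l"
  shows "\<exists>k\<ge>1. \<exists>j<l^k. column th l A = card ((\<lambda>a. subst_iter th l k a j) ` A)"
proof -
  have "\<exists>n. \<exists>k\<ge>1. \<exists>j<l^k. n = card ((\<lambda>a. subst_iter th l k a j) ` A)"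
    using assms by (intro exI[of _ "card ((\<lambda>a. subst_iter th l 1 a 0) ` A)"] exI[of _ 1]) auto
  then show ?thesis unfolding column_def by (rule LeastI_ex[where P="\<lambda>n. \<exists>k\<ge>1. \<exists>j<l^k. n = card ((\<lambda>a. subst_iter th l k a j) ` A)"]) 
qed

lemma col_le:
  assumes "k \<ge> 1" "j < l^k"
  shows "column th l A \<le> card ((\<lambda>a. subst_iter th l k a j) ` A)"
  unfolding column_def by (rule Least_le) (use assms in blast)

theorem mainTheorem15:
  fixes th :: "'a \<Rightarrow> nat \<Rightarrow> 'a" and ze :: "'b \<Rightarrow> nat \<Rightarrow> 'b"
    and l :: nat and A :: "'a set" and B :: "'b set" and J :: "('a \<times> 'b) set"
    and a0 :: 'a and b0 :: 'b and e :: "'a \<times> 'b"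
  assumes "l \<ge> 2"
    and "standing th l A a0" and "primitive th l A"
    and "standing ze l B b0" and "primitive ze l B"
    and "is_subst_joining th ze l A B J"
    and "primitive (join_subst th ze) l J"
    and "e \<in> J" and "join_subst th ze e 0 = e"
  shows "lcm (height th l a0) (height ze l b0) dvd height (join_subst th ze) l e
       \<and> max (column th l A) (column ze l B) \<le> column (join_subst th ze) l J
       \<and> column (join_subst th ze) l J \<le> column th l A * column ze l B"
proof -
  note l = assms(1)
  have l0: "0 < l" using l by simp
  define S where "S = join_subst th ze"
  have stA: "finite A" "\<forall>a\<in>A. \<forall>j<l. th a j \<in> A" "a0 \<in> A" "th a0 0 = a0"
    using assms(2) unfolding standing_def by auto
  have stB: "finite B" "\<forall>a\<in>B. \<forall>j<l. ze a j \<in> B" "b0 \<in> B" "ze b0 0 = b0"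
    using assms(4) unfolding standing_def by auto
  have jn: "J \<subseteq> A \<times> B" "fst ` J = A" "snd ` J = B"
     "\<And>a b j. (a, b) \<in> J \<Longrightarrow> j < l \<Longrightarrow> (th a j, ze b j) \<in> J"
    using assms(6) unfolding is_subst_joining_def by auto
  have gA: "good th l A a0" using stA l assms(3) unfolding good_def by blast
  have gB: "good ze l B b0" using stB l assms(5) unfolding good_def by blast
  have Jcl: "\<forall>p\<in>J. \<forall>j<l. S p j \<in> J"
    using jn(4) unfolding S_def join_subst_def by auto
  have Se: "S e 0 = e" using assms(9) S_def by simp
  have gJ: "good S l J e" using l Jcl assms(8) Se assms(7) unfolding good_def S_def by blast
  obtain e1 e2 where e: "e = (e1, e2)" by (cases e)
  have e1: "e1 \<in> A" "th e1 0 = e1" using jn(2) assms(8) Se e unfolding S_def join_subst_def by force+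
  have e2: "e2 \<in> B" "ze e2 0 = e2" using jn(3) assms(8) Se e unfolding S_def join_subst_def by force+
  let ?hA = "height th l a0" and ?hB = "height ze l b0"
  have hA: "coprime ?hA l" using height_props[OF gA] by blast
  have hB: "coprime ?hB l" using height_props[OF gB] by blast
  have rdiv: "lcm ?hA ?hB dvd r" if r: "r \<in> {r. r \<ge> 1 \<and> fixpt S l e r = fixpt S l e 0}" for r
  proof -
    have "fixpt S l e r = e" using r fixpt0[of S e l] Se by simp
    then have "subst_iter S l (Suc r) e r = e" unfolding fixpt_def .
    then have "subst_iter th l (Suc r) e1 r = e1" "subst_iter ze l (Suc r) e2 r = e2"
      unfolding S_def si_join e by simp_all
    then have "?hA dvd r" "?hB dvd r" using other_fixed[OF gA e1] other_fixed[OF gB e2] by blast+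
    then show ?thesis by (rule lcm_least)
  qed
  have lG: "lcm ?hA ?hB dvd GG S l e" unfolding GG_def by (rule Gcd_greatest) (rule rdiv)
  have lcd: "lcm ?hA ?hB dvd ?hA * ?hB" by (intro lcm_least) auto
  have "coprime (?hA * ?hB) l" using hA hB by simp
  then have lc: "coprime (lcm ?hA ?hB) l" using lcd by (rule coprime_divisors[rotated 2]) simp
  have H: "lcm ?hA ?hB dvd height S l e" using height_props[OF gJ] lc lG by blast
  have finJ: "finite J" using jn(1) stA(1) stB(1) finite_SigmaI finite_subset by (metis finite_cartesian_product)
  obtain kS jS where kS: "kS \<ge> 1" "jS < l^kS"
    and cS: "column S l J = card ((\<lambda>p. subst_iter S l kS p jS) ` J)"
    using col_attained[OF l0, of S J] by blast
  have imgfst: "fst ` ((\<lambda>p. subst_iter S l kS p jS) ` J) = (\<lambda>a. subst_iter th l kS a jS) ` A"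
    unfolding jn(2)[symmetric] image_image S_def si_join by simp
  have imgsnd: "snd ` ((\<lambda>p. subst_iter S l kS p jS) ` J) = (\<lambda>a. subst_iter ze l kS a jS) ` B"
    unfolding jn(3)[symmetric] image_image S_def si_join by simp
  have "column th l A \<le> card ((\<lambda>a. subst_iter th l kS a jS) ` A)" by (rule col_le[OF kS])
  also have "\<dots> \<le> column S l J" unfolding cS imgfst[symmetric]
    by (rule card_image_le) (use finJ in simp)
  finally have c1: "column th l A \<le> column S l J" .
  have "column ze l B \<le> card ((\<lambda>a. subst_iter ze l kS a jS) ` B)" by (rule col_le[OF kS])
  also have "\<dots> \<le> column S l J" unfolding cS imgsnd[symmetric]
    by (rule card_image_le) (use finJ in simp)
  finally have c2: "column ze l B \<le> column S l J" .
  obtain k1 j1 where k1: "k1 \<ge> 1" "j1 < l^k1"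
    and c1A: "column th l A = card ((\<lambda>a. subst_iter th l k1 a j1) ` A)"
    using col_attained[OF l0, of th A] by blast
  obtain k2 j2 where k2: "k2 \<ge> 1" "j2 < l^k2"
    and c2B: "column ze l B = card ((\<lambda>a. subst_iter ze l k2 a j2) ` B)"
    using col_attained[OF l0, of ze B] by blast
  define K where "K = k1 + k2"
  define jj where "jj = j1 * l^k2 + j2"
  have jjK: "jj < l^K"
  proof -
    have "jj < (j1 + 1) * l^k2" using k2(2) unfolding jj_def by simp
    also have "\<dots> \<le> l^k1 * l^k2" using k1(2) by (intro mult_right_mono) auto
    finally show ?thesis unfolding K_def by (simp add: power_add)
  qed
  have K1: "K \<ge> 1" using k1 unfolding K_def by simp
  have dv: "(j1 * l^k2 + j2) div l^k2 = j1" using k2(2) l0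
    by (simp add: add.commute[of "j1*l^k2"])
  have dA: "\<And>a. subst_iter th l K a jj = subst_iter th l k2 (subst_iter th l k1 a j1) j2"
    unfolding K_def jj_def using si_add[OF l0, of th k1 k2 _ "j1 * l^k2 + j2"] k2(2) dv by simp
  have dB: "\<And>a. subst_iter ze l K a jj = subst_iter ze l k2 (subst_iter ze l k1 a j1) j2"
    unfolding K_def jj_def using si_add[OF l0, of ze k1 k2 _ "j1 * l^k2 + j2"] k2(2) dv by simp
  define IA where "IA = (\<lambda>a. subst_iter th l K a jj) ` A"
  define IB where "IB = (\<lambda>a. subst_iter ze l K a jj) ` B"
  have IA_eq: "IA = (\<lambda>x. subst_iter th l k2 x j2) ` ((\<lambda>a. subst_iter th l k1 a j1) ` A)"
    unfolding IA_def image_image dA ..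
  have cardIA: "card IA \<le> column th l A" unfolding IA_eq c1A by (rule card_image_le) (use stA(1) in simp)
  have IB_sub: "IB \<subseteq> (\<lambda>x. subst_iter ze l k2 x j2) ` B"
  proof
    fix y assume "y \<in> IB"
    then obtain b where b: "b \<in> B" "y = subst_iter ze l k2 (subst_iter ze l k1 b j1) j2"
      unfolding IB_def dB by blast
    have "subst_iter ze l k1 b j1 \<in> B" using si_closed[OF l0 stB(2) b(1) k1(2)] .
    then show "y \<in> (\<lambda>x. subst_iter ze l k2 x j2) ` B" using b(2) by blast
  qed
  have cardIB: "card IB \<le> column ze l B" unfolding c2B
    by (rule card_mono[OF _ IB_sub]) (use stB(1) in simp)
  have Ssub: "(\<lambda>p. subst_iter S l K p jj) ` J \<subseteq> IA \<times> IB"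
    unfolding IA_def IB_def S_def si_join using jn(1) by auto
  have "column S l J \<le> card ((\<lambda>p. subst_iter S l K p jj) ` J)" by (rule col_le[OF K1 jjK])
  also have "\<dots> \<le> card (IA \<times> IB)"
    by (rule card_mono[OF _ Ssub]) (use stA(1) stB(1) in \<open>simp add: IA_def IB_def\<close>)
  also have "\<dots> = card IA * card IB" by (rule card_cartesian_product)
  also have "\<dots> \<le> column th l A * column ze l B" using cardIA cardIB by (rule mult_le_mono)
  finally have c3: "column S l J \<le> column th l A * column ze l B" .
  show ?thesis using H c1 c2 c3 unfolding S_def by simp
qed

end
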